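(* Let $G$ be a topological group and $\mathcal{Y}$ a Hausdorff locally convex space. Let $X,X_1,X_2\in\mathfrak{L}(G)$ be such that $$X(t)=\lim_{n\to\infty}\Big(X_1\big(\tfrac{t}{n}\big)X_2\big(\tfrac{t}{n}\big)\Big)^n$$ for all $t\in\mathbb{R}$, with convergence uniform on every compact subset of $\mathbb{R}$. Then $D^\lambda_X\phi=D^\lambda_{X_1}\phi+D^\lambda_{X_2}\phi$ for every $\phi\in\mathcal{LUC}^1_{\rm loc}(G,\mathcal{Y})$.
   Context: All topological groups are Hausdorff. $\mathfrak{L}(G)$ is the set of continuous homomorphisms $(\mathbb{R},+)\to G$. For $\phi\colon G\to\mathcal{Y}$, $X\in\mathfrak{L}(G)$, $g\in G$: $(D^\lambda_X\phi)(g)=\lim_{t\to0}\frac{\phi(gX(t))-\phi(g)}{t}$ when it exists. $\mathcal{LUC}_{\rm loc}(G,\mathcal{Y})$ is the set of $\phi\colon G\to\mathcal{Y}$ such that every $g_0\in G$ has a neighborhood $V$ with the property: for every neighborhood $U$ of $0\in\mathcal{Y}$ there is a neighborhood $W$ of $\mathbf{1}\in G$ such that $x,y\in V$, $x^{-1}y\in W$ imply $\phi(x)-\phi(y)\in U$. $\mathcal{LUC}^1_{\rm loc}(G,\mathcal{Y})$ is the set of $\phi\in\mathcal{LUC}_{\rm loc}(G,\mathcal{Y})$ such that $D^\lambda_X\phi(g)$ exists for all $X,g$ and $D^\lambda_X\phi\in\mathcal{LUC}_{\rm loc}(G,\mathcal{Y})$ for every $X\in\mathfrak{L}(G)$. 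*)

theory Defs
  imports "HOL-Analysis.Analysis"
begin

text \<open>Topological groups are written additively (type class group_add, which is
  NOT assumed commutative). The group product x y is x + y, the inverse is -x,
  the identity is 0. Hausdorffness comes from the class t2_space.\<close>

definition topological_group :: "'g::{t2_space,group_add} itself \<Rightarrow> bool" where
  "topological_group _ \<longleftrightarrow>
     continuous_on UNIV (\<lambda>p::'g \<times> 'g. fst p + snd p) \<and>
     continuous_on UNIV (uminus :: 'g \<Rightarrow> 'g)"

text \<open>Hausdorff locally convex (real) topological vector space.\<close>
definition locally_convex_space :: "'y::{t2_space,real_vector} itself \<Rightarrow> bool" where
  "locally_convex_space _ \<longleftrightarrow>
     continuous_on UNIV (\<lambda>p::'y \<times> 'y. fst p + snd p) \<and>
     continuous_on UNIV (\<lambda>p::real \<times> 'y. fst p *\<^sub>R snd p) \<and>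
     (\<forall>U::'y set. open U \<and> 0 \<in> U \<longrightarrow> (\<exists>C. convex C \<and> open C \<and> 0 \<in> C \<and> C \<subseteq> U))"

text \<open>One-parameter subgroups: continuous homomorphisms (R,+) -> G.\<close>
definition one_param_subgroups :: "(real \<Rightarrow> 'g::{topological_space,group_add}) set" where
  "one_param_subgroups = {X. continuous_on UNIV X \<and> (\<forall>s t. X (s + t) = X s + X t)}"

text \<open>n-th power of a group element (additive notation: a + a + ... + a).\<close>
fun gpow :: "nat \<Rightarrow> 'g::group_add \<Rightarrow> 'g" where
  "gpow 0 a = 0"
| "gpow (Suc n) a = a + gpow n a"

text \<open>Left derivative along X at g: lim_{t->0} (phi(g X(t)) - phi(g))/t.\<close>
definition has_left_deriv ::
  "('g::{topological_space,group_add} \<Rightarrow> 'y::{t2_space,real_vector}) \<Rightarrow> (real \<Rightarrow> 'g) \<Rightarrow> 'g \<Rightarrow> 'y \<Rightarrow> bool" where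
  "has_left_deriv \<phi> X g d \<longleftrightarrow>
     ((\<lambda>t. (1 / t) *\<^sub>R (\<phi> (g + X t) - \<phi> g)) \<longlongrightarrow> d) (at 0)"

definition left_deriv ::
  "('g::{topological_space,group_add} \<Rightarrow> 'y::{t2_space,real_vector}) \<Rightarrow> (real \<Rightarrow> 'g) \<Rightarrow> 'g \<Rightarrow> 'y" where
  "left_deriv \<phi> X g = Lim (at 0) (\<lambda>t. (1 / t) *\<^sub>R (\<phi> (g + X t) - \<phi> g))"

definition LUC_loc :: "('g::{topological_space,group_add} \<Rightarrow> 'y::{topological_space,real_vector}) set" where
  "LUC_loc = {\<phi>. \<forall>g0. \<exists>V. open V \<and> g0 \<in> V \<and>
      (\<forall>U. open U \<and> 0 \<in> U \<longrightarrow>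
        (\<exists>W. open W \<and> 0 \<in> W \<and>
          (\<forall>x\<in>V. \<forall>y\<in>V. - x + y \<in> W \<longrightarrow> \<phi> x - \<phi> y \<in> U)))}"

definition LUC1_loc :: "('g::{topological_space,group_add} \<Rightarrow> 'y::{t2_space,real_vector}) set" where
  "LUC1_loc = {\<phi>. \<phi> \<in> LUC_loc \<and>
      (\<forall>X\<in>one_param_subgroups. \<forall>g. \<exists>d. has_left_deriv \<phi> X g d) \<and>
      (\<forall>X\<in>one_param_subgroups. left_deriv \<phi> X \<in> LUC_loc)}"

end

theory Submission
  imports Defs "HOL-Analysis.Analysis"
begin

lemma conv_add:
  fixes C :: "'y::real_vector set"
  assumes "convex C" "0 \<in> C" "a \<ge> 0" "b \<ge> 0"
    "x \<in> (\<lambda>v. a *\<^sub>R v) ` C" "y \<in> (\<lambda>v. b *\<^sub>R v) ` C"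
  shows "x + y \<in> (\<lambda>v. (a+b) *\<^sub>R v) ` C"
proof -
  obtain c1 c2 where c: "c1 \<in> C" "c2 \<in> C" "x = a *\<^sub>R c1" "y = b *\<^sub>R c2" using assms by auto
  show ?thesis
  proof (cases "a + b = 0")
    case True
    then have "a = 0" "b = 0" using assms by auto
    then show ?thesis using c assms by (auto intro!: image_eqI[of _ _ 0])
  next
    case False
    then have pos: "a + b > 0" using assms by auto
    let ?c = "(a/(a+b)) *\<^sub>R c1 + (b/(a+b)) *\<^sub>R c2"
    have "?c \<in> C" using assms(1) c(1,2) assms(3,4) pos
      by (intro convexD) (auto simp: add_divide_distrib[symmetric])
    moreover have "x + y = (a+b) *\<^sub>R ?c" using pos c
      by (simp add: scaleR_add_right)
    ultimately show ?thesis by auto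
  qed
qed

lemma conv_sum:
  fixes C :: "'y::real_vector set"
  assumes "convex C" "0 \<in> C" "a \<ge> 0"
    "\<And>k. k < n \<Longrightarrow> x k \<in> (\<lambda>v. a *\<^sub>R v) ` C"
  shows "(\<Sum>k<n. x k) \<in> (\<lambda>v. (real n * a) *\<^sub>R v) ` C"
  using assms(4)
proof (induction n)
  case 0
  then show ?case using assms(2) by (auto intro!: image_eqI[of _ _ 0])
next
  case (Suc n)
  have "(\<Sum>k<n. x k) + x n \<in> (\<lambda>v. (real n * a + a) *\<^sub>R v) ` C"
    using Suc assms by (intro conv_add) auto
  then show ?case by (simp add: algebra_simps)
qed

lemma MV:
  fixes f :: "real \<Rightarrow> 'y::real_vector" and C :: "'y set"
  assumes C: "convex C" "0 \<in> C" and s: "s \<ge> 0" and e: "e > 0"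
    and D: "\<And>r. 0 \<le> r \<Longrightarrow> r \<le> s \<Longrightarrow> eventually (\<lambda>h. (1/h) *\<^sub>R (f (r+h) - f r) \<in> C) (at 0)"
  shows "f s - f 0 \<in> (\<lambda>v. (s+e) *\<^sub>R v) ` C"
proof -
  define P where "P q \<longleftrightarrow> f q - f 0 \<in> (\<lambda>v. (q+e) *\<^sub>R v) ` C" for q
  define T where "T = {r. 0 \<le> r \<and> r \<le> s \<and> (\<forall>q. 0 \<le> q \<and> q \<le> r \<longrightarrow> P q)}"
  have P0: "P 0" unfolding P_def using C by (auto intro!: image_eqI[of _ _ 0])
  have T0: "0 \<in> T" using P0 s unfolding T_def by auto
  have bdd: "bdd_above T" unfolding T_def by (auto intro!: bdd_aboveI[of _ s])
  define m where "m = Sup T"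
  have m0: "0 \<le> m" unfolding m_def using T0 bdd by (rule cSup_upper)
  have ms: "m \<le> s" unfolding m_def using T0 by (intro cSup_least) (auto simp: T_def)
  have below: "P q" if q: "0 \<le> q" "q < m" for q
  proof -
    obtain r where "r \<in> T" "q < r" using less_cSup_iff[of T q] T0 bdd q m_def by auto
    then show ?thesis using q unfolding T_def by auto
  qed
  have step: "P (r + h)" if "0 \<le> r" "r \<le> s" "P r" "h \<ge> 0"
      "(1/h) *\<^sub>R (f (r+h) - f r) \<in> C" "h > 0" for r h
  proof -
    have "f (r+h) - f r \<in> (\<lambda>v. h *\<^sub>R v) ` C"
      using that by (intro image_eqI[of _ _ "(1/h) *\<^sub>R (f (r+h) - f r)"]) auto
    then have "(f (r+h) - f r) + (f r - f 0) \<in> (\<lambda>v. (h + (r+e)) *\<^sub>R v) ` C"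
      using that(3) C e that unfolding P_def by (intro conv_add) auto
    then show ?thesis unfolding P_def by (simp add: algebra_simps)
  qed
  have Pm: "P m"
  proof (cases "m = 0")
    case True then show ?thesis using P0 by simp
  next
    case False
    then have mpos: "m > 0" using m0 by simp
    obtain d where d: "d > 0" "\<And>h. h \<noteq> 0 \<Longrightarrow> \<bar>h\<bar> < d \<Longrightarrow> (1/h) *\<^sub>R (f (m+h) - f m) \<in> C"
      using D[OF m0 ms] unfolding eventually_at by (auto simp: dist_real_def)
    define h where "h = min (d/2) m"
    have h: "h > 0" "h \<le> m" "h < d" using d mpos by (auto simp: h_def)
    have "(1/(-h)) *\<^sub>R (f (m + -h) - f m) \<in> C" using d(2)[of "-h"] h by auto
    moreover have "(1/(-h)) *\<^sub>R (f (m + -h) - f m) = (1/h) *\<^sub>R (f ((m-h)+h) - f (m-h))"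
      by (simp add: algebra_simps)
    ultimately have "(1/h) *\<^sub>R (f ((m-h)+h) - f (m-h)) \<in> C" by simp
    moreover have "P (m - h)"
    proof (cases "h = m")
      case True then show ?thesis using P0 by simp
    next
      case False then show ?thesis using h by (intro below) auto
    qed
    ultimately have "P ((m-h)+h)" using h ms by (intro step) auto
    then show ?thesis by simp
  qed
  have mT: "m \<in> T" unfolding T_def using m0 ms below Pm
    by (auto simp: le_less)
  have "m = s"
  proof (rule ccontr)
    assume "m \<noteq> s"
    then have mls: "m < s" using ms by simp
    obtain d where d: "d > 0" "\<And>h. h \<noteq> 0 \<Longrightarrow> \<bar>h\<bar> < d \<Longrightarrow> (1/h) *\<^sub>R (f (m+h) - f m) \<in> C"
      using D[OF m0 ms] unfolding eventually_at by (auto simp: dist_real_def)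
    define r where "r = min (m + d/2) s"
    have r: "m < r" "r \<le> s" "r < m + d" using d mls by (auto simp: r_def)
    have "r \<in> T" unfolding T_def
    proof (intro CollectI conjI allI impI)
      fix q assume q: "0 \<le> q \<and> q \<le> r"
      show "P q"
      proof (cases "q \<le> m")
        case True then show ?thesis using mT q unfolding T_def by auto
      next
        case False
        have "(1 / (q - m)) *\<^sub>R (f (m + (q - m)) - f m) \<in> C" using d(2)[of "q-m"] False q r by auto
        then have "P (m + (q - m))" using d r q m0 ms Pm False by (intro step) auto
        then show ?thesis by simp
      qed
    qed (use r m0 in auto)
    then have "r \<le> m" unfolding m_def using bdd by (rule cSup_upper)
    then show False using r by simp
  qed
  then show ?thesis using Pm unfolding P_def by simp
qed


lemma open_vimage_UNIV: "continuous_on UNIV f \<Longrightarrow> open S \<Longrightarrow> open {x. f x \<in> S}"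
  using continuous_on_open_vimage[of UNIV f] by (auto simp: vimage_def)

lemma tg_cont_pair:
  assumes "topological_group TYPE('g::{t2_space,group_add})"
  shows "continuous_on UNIV (\<lambda>p::'g \<times> 'g. fst p + snd p)"
  using assms unfolding topological_group_def by auto

lemma tg_cont_add:
  assumes "topological_group TYPE('g::{t2_space,group_add})"
    and "continuous_on UNIV (f :: 'a::topological_space \<Rightarrow> 'g)" "continuous_on UNIV g"
  shows "continuous_on UNIV (\<lambda>x. f x + g x)"
proof -
  have "continuous_on UNIV (\<lambda>x. (f x, g x))" using assms by (intro continuous_on_Pair)
  from continuous_on_compose2[OF tg_cont_pair[OF assms(1)] this]
  show ?thesis by auto
qed

lemma tg_box:
  assumes "topological_group TYPE('g::{t2_space,group_add})" "open S" "a + b \<in> S"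
  shows "\<exists>A B. open A \<and> open B \<and> a \<in> A \<and> (b::'g) \<in> B \<and> (\<forall>x\<in>A. \<forall>y\<in>B. x + y \<in> S)"
proof -
  have "open {p::'g\<times>'g. fst p + snd p \<in> S}"
    by (rule open_vimage_UNIV[OF tg_cont_pair[OF assms(1)] assms(2)])
  from open_prod_elim[OF this, of "(a,b)"] assms(3)
  obtain A B where "open A" "open B" "(a,b) \<in> A \<times> B" "A \<times> B \<subseteq> {p. fst p + snd p \<in> S}"
    by auto
  moreover have "\<forall>x\<in>A. \<forall>y\<in>B. x + y \<in> S"
  proof (intro ballI)
    fix x y assume "x \<in> A" "y \<in> B"
    then have "(x,y) \<in> A \<times> B" by simp
    then have "(x,y) \<in> {p. fst p + snd p \<in> S}" using \<open>A \<times> B \<subseteq> _\<close> by (rule subsetD[rotated])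
    then show "x + y \<in> S" by simp
  qed
  ultimately show ?thesis apply - apply (rule exI[of _ A], rule exI[of _ B]) by simp
qed

lemma tg_ltrans_open:
  assumes "topological_group TYPE('g::{t2_space,group_add})" "open S"
  shows "open {y::'g. a + y \<in> S}"
  by (rule open_vimage_UNIV[OF tg_cont_add[OF assms(1) continuous_on_const continuous_on_id] assms(2)])

lemma gpow_cont:
  assumes "topological_group TYPE('g::{t2_space,group_add})"
  shows "continuous_on UNIV (gpow k :: 'g \<Rightarrow> 'g)"
proof (induction k)
  case 0 then show ?case by (simp add: continuous_on_const)
next
  case (Suc k)
  have "continuous_on UNIV (\<lambda>a::'g. a + gpow k a)"
    by (rule tg_cont_add[OF assms continuous_on_id Suc])
  then show ?case by simp
qed

lemma gpow_Suc': "gpow (Suc k) a = gpow k a + (a::'g::group_add)"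
  by (induction k) (simp_all, metis add.assoc)

lemma gpow_zero: "gpow k (0::'g::group_add) = 0"
  by (induction k) auto

lemma lc_affine_cont:
  assumes "locally_convex_space TYPE('y::{t2_space,real_vector})"
  shows "continuous_on UNIV (\<lambda>x::'y. c + a *\<^sub>R x)"
proof -
  have add: "continuous_on UNIV (\<lambda>p::'y \<times> 'y. fst p + snd p)"
   and mul: "continuous_on UNIV (\<lambda>p::real \<times> 'y. fst p *\<^sub>R snd p)"
    using assms unfolding locally_convex_space_def by auto
  have "continuous_on UNIV (\<lambda>x::'y. (a, x))" by (intro continuous_on_Pair continuous_on_const continuous_on_id)
  from continuous_on_compose2[OF mul this] have m: "continuous_on UNIV (\<lambda>x::'y. a *\<^sub>R x)" by auto
  have "continuous_on UNIV (\<lambda>x::'y. (c, a *\<^sub>R x))" by (intro continuous_on_Pair continuous_on_const m)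
  from continuous_on_compose2[OF add this] show ?thesis by auto
qed

lemma lc_open_affine:
  assumes "locally_convex_space TYPE('y::{t2_space,real_vector})" "open S"
  shows "open {x::'y. c + a *\<^sub>R x \<in> S}"
  by (rule open_vimage_UNIV[OF lc_affine_cont[OF assms(1)] assms(2)])

lemma lc_open_scale:
  assumes "locally_convex_space TYPE('y::{t2_space,real_vector})" "open (S::'y set)" "a \<noteq> 0"
  shows "open ((\<lambda>v. a *\<^sub>R v) ` S)"
proof -
  have "(\<lambda>v. a *\<^sub>R v) ` S = {x. 0 + (1/a) *\<^sub>R x \<in> S}"
    using assms(3) by (auto intro!: image_eqI[of _ _ "(1/a) *\<^sub>R _"])
  then show ?thesis using lc_open_affine[OF assms(1,2), of 0 "1/a"] by simp
qed

lemma LUC_cont: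
  assumes tg: "topological_group TYPE('g::{t2_space,group_add})"
    and lc: "locally_convex_space TYPE('y::{t2_space,real_vector})"
    and phi: "(\<phi>::'g \<Rightarrow> 'y) \<in> LUC_loc" and O: "open O'" "\<phi> z \<in> O'"
  shows "\<exists>Ob. open Ob \<and> z \<in> Ob \<and> (\<forall>y\<in>Ob. \<phi> y \<in> O')"
proof -
  have "\<exists>V. open V \<and> z \<in> V \<and>
      (\<forall>U. open U \<and> 0 \<in> U \<longrightarrow>
        (\<exists>W. open W \<and> 0 \<in> W \<and>
          (\<forall>x\<in>V. \<forall>y\<in>V. - x + y \<in> W \<longrightarrow> \<phi> x - \<phi> y \<in> U)))"
    using phi unfolding LUC_loc_def mem_Collect_eq by (rule spec)
  then obtain V where V: "open V" "z \<in> V" and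
    H: "\<forall>U. open U \<and> 0 \<in> U \<longrightarrow> (\<exists>W. open W \<and> 0 \<in> W \<and>
          (\<forall>x\<in>V. \<forall>y\<in>V. - x + y \<in> W \<longrightarrow> \<phi> x - \<phi> y \<in> U))"
    by blast
  define U where "U = {u. \<phi> z + (-1) *\<^sub>R u \<in> O'}"
  have oU: "open U" unfolding U_def by (rule lc_open_affine[OF lc O(1)])
  have zU: "0 \<in> U" using O unfolding U_def by simp
  obtain W where W: "open W" "0 \<in> W" "\<forall>x\<in>V. \<forall>y\<in>V. - x + y \<in> W \<longrightarrow> \<phi> x - \<phi> y \<in> U"
    using H oU zU by blast
  define Ob where "Ob = V \<inter> {y. - z + y \<in> W}"
  have "open Ob" unfolding Ob_def using V(1) tg_ltrans_open[OF tg W(1)] by (rule open_Int)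
  moreover have "z \<in> Ob" using V W unfolding Ob_def by simp
  moreover have "\<forall>y\<in>Ob. \<phi> y \<in> O'"
  proof
    fix y assume y: "y \<in> Ob"
    then have "\<phi> z - \<phi> y \<in> U" using W(3) V(2) unfolding Ob_def by blast
    moreover have "\<phi> z + (-1) *\<^sub>R (\<phi> z - \<phi> y) = \<phi> y" by (simp add: scaleR_diff_right)
    ultimately show "\<phi> y \<in> O'" unfolding U_def by simp
  qed
  ultimately show ?thesis by blast
qed

lemma ops_zero:
  assumes "X \<in> one_param_subgroups"
  shows "X 0 = (0::'g::{topological_space,group_add})"
proof -
  have "X (0+0) = X 0 + X 0" using assms unfolding one_param_subgroups_def by blast
  then have "X 0 + 0 = X 0 + X 0" by simp
  then show ?thesis using add_left_cancel by metis
qed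

lemma ops_small:
  assumes "X \<in> one_param_subgroups" "open W" "(0::'g::{topological_space,group_add}) \<in> W"
  shows "\<exists>d>0. \<forall>r. \<bar>r\<bar> < d \<longrightarrow> X r \<in> W"
proof -
  have "continuous_on UNIV X" using assms unfolding one_param_subgroups_def by blast
  then have "isCont X 0" by (simp add: continuous_on_eq_continuous_at)
  then have "(X \<longlongrightarrow> X 0) (at 0)" by (simp add: isCont_def)
  then have "eventually (\<lambda>r. X r \<in> W) (at 0)"
    using assms ops_zero[OF assms(1)] by (intro topological_tendstoD) auto
  then obtain d where d: "d > 0" "\<And>r. r \<noteq> 0 \<Longrightarrow> \<bar>r\<bar> < d \<Longrightarrow> X r \<in> W"
    unfolding eventually_at by (auto simp: dist_real_def)
  have "\<forall>r. \<bar>r\<bar> < d \<longrightarrow> X r \<in> W"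
  proof (intro allI impI)
    fix r :: real assume r: "\<bar>r\<bar> < d"
    show "X r \<in> W"
    proof (cases "r = 0")
      case True then show ?thesis using assms(3) ops_zero[OF assms(1)] by simp
    next
      case False then show ?thesis using d r by blast
    qed
  qed
  then show ?thesis using d by blast
qed


lemma hd_Lim:
  assumes "has_left_deriv \<phi> Y p d"
  shows "left_deriv \<phi> Y p = d"
  using assms unfolding has_left_deriv_def left_deriv_def
  by (intro tendsto_Lim) auto

lemma UE:
  fixes \<phi> :: "'g::{t2_space,group_add} \<Rightarrow> 'y::{t2_space,real_vector}"
  assumes tg: "topological_group TYPE('g)"
    and lc: "locally_convex_space TYPE('y)"
    and Y: "Y \<in> one_param_subgroups"
    and ex: "\<And>p. \<exists>d. has_left_deriv \<phi> Y p d"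
    and Dc: "left_deriv \<phi> Y \<in> LUC_loc"
    and C: "convex C" "open C" "0 \<in> C"
  shows "\<exists>V dl. open V \<and> g \<in> V \<and> dl > 0 \<and> (\<forall>p\<in>V. \<forall>s. 0 < s \<and> s < dl \<longrightarrow>
     \<phi> (p + Y s) - \<phi> p - s *\<^sub>R left_deriv \<phi> Y g \<in> (\<lambda>v. (2 * s) *\<^sub>R v) ` C)"
proof -
  define D where "D = left_deriv \<phi> Y"
  have hd: "has_left_deriv \<phi> Y p (D p)" for p
    using ex[of p] hd_Lim unfolding D_def by metis
  define O' where "O' = {x. (- D g) + 1 *\<^sub>R x \<in> C}"
  have oO: "open O'" unfolding O'_def by (rule lc_open_affine[OF lc C(2)])
  have gO: "D g \<in> O'" using C unfolding O'_def by simp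
  obtain V0 where V0: "open V0" "g \<in> V0" "\<forall>q\<in>V0. D q \<in> O'"
    using LUC_cont[OF tg lc Dc[folded D_def] oO gO] by blast
  obtain V W where VW: "open V" "open W" "g \<in> V" "0 \<in> W" "\<forall>x\<in>V. \<forall>y\<in>W. x + y \<in> V0"
    using tg_box[OF tg V0(1), of g 0] V0(2) by auto
  obtain dl where dl: "dl > 0" "\<forall>r. \<bar>r\<bar> < dl \<longrightarrow> Y r \<in> W"
    using ops_small[OF Y VW(2,4)] by blast
  have main: "\<phi> (p + Y s) - \<phi> p - s *\<^sub>R D g \<in> (\<lambda>v. (2 * s) *\<^sub>R v) ` C"
    if p: "p \<in> V" and s: "0 < s" "s < dl" for p s
  proof -
    define f where "f r = \<phi> (p + Y r) - r *\<^sub>R D g" for r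
    have "f s - f 0 \<in> (\<lambda>v. (s+s) *\<^sub>R v) ` C"
    proof (rule MV[OF C(1,3)])
      fix r assume r: "0 \<le> r" "r \<le> s"
      have "Y r \<in> W" using dl r s by auto
      then have "p + Y r \<in> V0" using VW p by auto
      then have inO: "D (p + Y r) \<in> O'" using V0 by auto
      have "eventually (\<lambda>h. (1 / h) *\<^sub>R (\<phi> ((p + Y r) + Y h) - \<phi> (p + Y r)) \<in> O') (at 0)"
        using hd[of "p + Y r"] oO inO unfolding has_left_deriv_def
        by (intro topological_tendstoD) auto
      moreover have "eventually (\<lambda>h::real. h \<noteq> 0) (at 0)"
        by (simp add: eventually_at_filter)
      ultimately show "eventually (\<lambda>h. (1/h) *\<^sub>R (f (r+h) - f r) \<in> C) (at 0)"
      proof (rule eventually_elim2)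
        fix h :: real
        assume h1: "(1 / h) *\<^sub>R (\<phi> ((p + Y r) + Y h) - \<phi> (p + Y r)) \<in> O'" and h0: "h \<noteq> 0"
        have YY: "Y (r + h) = Y r + Y h" using Y unfolding one_param_subgroups_def by blast
        have e1: "p + Y (r+h) = (p + Y r) + Y h" by (simp add: YY add.assoc)
        have e2: "f (r+h) - f r = (\<phi> ((p + Y r) + Y h) - \<phi> (p + Y r)) - h *\<^sub>R D g"
          unfolding f_def e1 by (simp add: scaleR_left_distrib)
        have "(1/h) *\<^sub>R (f (r+h) - f r) =
              (- D g) + 1 *\<^sub>R ((1 / h) *\<^sub>R (\<phi> ((p + Y r) + Y h) - \<phi> (p + Y r)))"
          unfolding e2 using h0 by (simp add: scaleR_diff_right)
        then show "(1/h) *\<^sub>R (f (r+h) - f r) \<in> C" using h1 unfolding O'_def by simp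
      qed
    qed (use s in auto)
    moreover have "f s - f 0 = \<phi> (p + Y s) - \<phi> p - s *\<^sub>R D g"
      unfolding f_def using ops_zero[OF Y] by simp
    moreover have "s + s = 2 * s" by simp
    ultimately show ?thesis by metis
  qed
  show ?thesis
    apply (rule exI[of _ V], rule exI[of _ dl])
    using VW(1,3) dl(1) main unfolding D_def by blast
qed


lemma sym_conv:
  fixes C0 :: "'y::real_vector set"
  assumes "convex C0"
  shows "convex (C0 \<inter> {x. - x \<in> C0})"
proof -
  have "convex {x. - x \<in> C0}"
  proof (rule convexI)
    fix x y :: 'y and u v :: real
    assume "x \<in> {x. - x \<in> C0}" "y \<in> {x. - x \<in> C0}" "0 \<le> u" "0 \<le> v" "u + v = 1"
    then have "u *\<^sub>R (-x) + v *\<^sub>R (-y) \<in> C0" using assms by (intro convexD) auto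
    then show "u *\<^sub>R x + v *\<^sub>R y \<in> {x. - x \<in> C0}" by (simp add: algebra_simps)
  qed
  then show ?thesis using assms by (rule convex_Int[rotated])
qed

lemma scale_mem: "c \<in> C \<Longrightarrow> a *\<^sub>R c \<in> (\<lambda>v. a *\<^sub>R v) ` C"
  by (rule imageI)

theorem lemma2p3:
  fixes X X1 X2 :: "real \<Rightarrow> 'g::{t2_space,group_add}"
  assumes "topological_group TYPE('g)"
    and "locally_convex_space TYPE('y::{t2_space,real_vector})"
    and "X \<in> one_param_subgroups" "X1 \<in> one_param_subgroups" "X2 \<in> one_param_subgroups"
    and "\<And>K U. compact K \<Longrightarrow> open U \<Longrightarrow> 0 \<in> U \<Longrightarrow>
           eventually (\<lambda>n. \<forall>t\<in>K. - X t + gpow n (X1 (t / real n) + X2 (t / real n)) \<in> U) sequentially"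
  shows "\<forall>\<phi>::'g \<Rightarrow> 'y. \<phi> \<in> LUC1_loc \<longrightarrow>
           left_deriv \<phi> X = (\<lambda>g. left_deriv \<phi> X1 g + left_deriv \<phi> X2 g)"
proof (intro allI impI ext)
  fix \<phi> :: "'g \<Rightarrow> 'y" and g :: 'g
  assume \<phi>: "\<phi> \<in> LUC1_loc"
  note tg = assms(1) and lc = assms(2) and HX = assms(3) and H1 = assms(4) and H2 = assms(5)
    and lim = assms(6)
  have ex: "\<And>Y p. Y \<in> one_param_subgroups \<Longrightarrow> \<exists>d. has_left_deriv \<phi> Y p d"
    and Dluc: "\<And>Y. Y \<in> one_param_subgroups \<Longrightarrow> left_deriv \<phi> Y \<in> LUC_loc"
    and \<phi>luc: "\<phi> \<in> LUC_loc"
    using \<phi> unfolding LUC1_loc_def by blast+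
  have hd: "has_left_deriv \<phi> Y p (left_deriv \<phi> Y p)" if "Y \<in> one_param_subgroups" for Y p
    using ex[OF that, of p] hd_Lim by metis
  define d where "d = left_deriv \<phi> X g"
  define D1 where "D1 = left_deriv \<phi> X1 g"
  define D2 where "D2 = left_deriv \<phi> X2 g"
  show "left_deriv \<phi> X g = D1 + D2" unfolding d_def[symmetric]
  proof (rule ccontr)
    assume ne: "d \<noteq> D1 + D2"
    define v where "v = d - (D1 + D2)"
    have v0: "v \<noteq> 0" using ne unfolding v_def by simp
    obtain U0 where U0: "open U0" "0 \<in> U0" "v \<notin> U0"
      using hausdorff[OF v0] by blast
    obtain C0 where C0: "convex C0" "open C0" "0 \<in> C0" "C0 \<subseteq> U0"
      using lc U0 unfolding locally_convex_space_def by blast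
    define C where "C = (\<lambda>x. (1/6) *\<^sub>R x) ` (C0 \<inter> {x. - x \<in> C0})"
    have Cconv: "convex C" unfolding C_def by (intro convex_scaling sym_conv C0(1))
    have "open {x::'y. 0 + (-1) *\<^sub>R x \<in> C0}" by (rule lc_open_affine[OF lc C0(2)])
    then have "open (C0 \<inter> {x. - x \<in> C0})" using C0(2) by (simp add: open_Int)
    then have Copen: "open C" unfolding C_def by (rule lc_open_scale[OF lc]) simp
    have C0': "0 \<in> C" unfolding C_def using C0(3) by (auto intro!: image_eqI[of _ _ 0])
    have Csym: "- x \<in> (\<lambda>v. a *\<^sub>R v) ` C" if xa: "x \<in> (\<lambda>v. a *\<^sub>R v) ` C" for x a
    proof -
      obtain c where c: "c \<in> C" "x = a *\<^sub>R c" using xa by blast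
      obtain c0 where c0: "c0 \<in> C0" "- c0 \<in> C0" "c = (1/6) *\<^sub>R c0" using c(1) unfolding C_def by blast
      have "- c \<in> C" unfolding C_def using c0 by (intro image_eqI[of _ _ "- c0"]) auto
      then show ?thesis using c by (intro image_eqI[of _ _ "- c"]) auto
    qed
    have vnot: "v \<notin> (\<lambda>v. 6 *\<^sub>R v) ` C"
    proof
      assume "v \<in> (\<lambda>v. 6 *\<^sub>R v) ` C"
      then obtain c0 where "c0 \<in> C0" "v = 6 *\<^sub>R ((1/6) *\<^sub>R c0)" unfolding C_def by blast
      then have "v \<in> C0" by simp
      then show False using C0(4) U0(3) by blast
    qed
    (* uniform estimates *)
    obtain V1 dl1 where UE1: "open V1" "g \<in> V1" "dl1 > 0"
      "\<forall>p\<in>V1. \<forall>s. 0 < s \<and> s < dl1 \<longrightarrow> \<phi> (p + X1 s) - \<phi> p - s *\<^sub>R D1 \<in> (\<lambda>v. (2 * s) *\<^sub>R v) ` C"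
      using UE[OF tg lc H1 ex[OF H1] Dluc[OF H1] Cconv Copen C0', of g] unfolding D1_def by blast
    obtain V2 dl2 where UE2: "open V2" "g \<in> V2" "dl2 > 0"
      "\<forall>p\<in>V2. \<forall>s. 0 < s \<and> s < dl2 \<longrightarrow> \<phi> (p + X2 s) - \<phi> p - s *\<^sub>R D2 \<in> (\<lambda>v. (2 * s) *\<^sub>R v) ` C"
      using UE[OF tg lc H2 ex[OF H2] Dluc[OF H2] Cconv Copen C0', of g] unfolding D2_def by blast
    obtain V2' W1 where VW1: "open V2'" "open W1" "g \<in> V2'" "0 \<in> W1" "\<forall>x\<in>V2'. \<forall>y\<in>W1. x + y \<in> V2"
      using tg_box[OF tg UE2(1), of g 0] UE2(2) by auto
    obtain dl3 where dl3: "dl3 > 0" "\<forall>r. \<bar>r\<bar> < dl3 \<longrightarrow> X1 r \<in> W1"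
      using ops_small[OF H1 VW1(2,4)] by blast
    define Vg where "Vg = V1 \<inter> V2'"
    define V0 where "V0 = {w. g + w \<in> Vg}"
    have oV0: "open V0" unfolding V0_def Vg_def
      by (rule tg_ltrans_open[OF tg]) (use UE1(1) VW1(1) in auto)
    have zV0: "0 \<in> V0" unfolding V0_def Vg_def using UE1(2) VW1(3) by simp
    obtain W3a W3b where W3: "open W3a" "open W3b" "0 \<in> W3a" "0 \<in> W3b" "\<forall>x\<in>W3a. \<forall>y\<in>W3b. x + y \<in> V0"
      using tg_box[OF tg oV0, of 0 0] zV0 by auto
    obtain dl4 where dl4: "dl4 > 0" "\<forall>r. \<bar>r\<bar> < dl4 \<longrightarrow> X r \<in> W3a"
      using ops_small[OF HX W3(1,3)] by blast
    define Od where "Od = {x. (- d) + 1 *\<^sub>R x \<in> C}"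
    have oOd: "open Od" unfolding Od_def by (rule lc_open_affine[OF lc Copen])
    have dOd: "d \<in> Od" unfolding Od_def using C0' by simp
    have "eventually (\<lambda>t. (1 / t) *\<^sub>R (\<phi> (g + X t) - \<phi> g) \<in> Od) (at 0)"
      using hd[OF HX, of g] oOd dOd unfolding has_left_deriv_def d_def
      by (intro topological_tendstoD) auto
    then obtain dl5 where dl5: "dl5 > 0"
      "\<And>t. t \<noteq> 0 \<Longrightarrow> \<bar>t\<bar> < dl5 \<Longrightarrow> (1 / t) *\<^sub>R (\<phi> (g + X t) - \<phi> g) \<in> Od"
      unfolding eventually_at by (auto simp: dist_real_def)
    define t where "t = Min {dl1, dl2, dl3, dl4, dl5} / 2"
    have tpos: "t > 0" unfolding t_def using UE1(3) UE2(3) dl3(1) dl4(1) dl5(1) by simp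
    have tlt: "t < dl1" "t < dl2" "t < dl3" "t < dl4" "t < dl5"
      unfolding t_def using UE1(3) UE2(3) dl3(1) dl4(1) dl5(1) by auto
    (* A *)
    have Aest: "\<phi> (g + X t) - \<phi> g - t *\<^sub>R d \<in> (\<lambda>v. t *\<^sub>R v) ` C"
    proof -
      have "(- d) + 1 *\<^sub>R ((1 / t) *\<^sub>R (\<phi> (g + X t) - \<phi> g)) \<in> C"
        using dl5(2)[of t] tpos tlt unfolding Od_def by auto
      then have "t *\<^sub>R ((- d) + 1 *\<^sub>R ((1 / t) *\<^sub>R (\<phi> (g + X t) - \<phi> g))) \<in> (\<lambda>v. t *\<^sub>R v) ` C"
        by (rule imageI)
      moreover have "t *\<^sub>R ((- d) + 1 *\<^sub>R ((1 / t) *\<^sub>R (\<phi> (g + X t) - \<phi> g))) =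
          \<phi> (g + X t) - \<phi> g - t *\<^sub>R d" using tpos by (simp add: scaleR_diff_right)
      ultimately show ?thesis by simp
    qed
    (* sequence *)
    obtain N1 where N1: "\<And>m. m \<ge> N1 \<Longrightarrow> \<forall>t'\<in>{0..t}. - X t' + gpow m (X1 (t' / real m) + X2 (t' / real m)) \<in> W3b"
      using lim[OF compact_Icc W3(2,4)] unfolding eventually_sequentially by blast
    define Ot where "Ot = {x. (- \<phi> (g + X t)) + 1 *\<^sub>R x \<in> (\<lambda>v. t *\<^sub>R v) ` C}"
    have oOt: "open Ot" unfolding Ot_def
      by (rule lc_open_affine[OF lc lc_open_scale[OF lc Copen]]) (use tpos in simp)
    have pOt: "\<phi> (g + X t) \<in> Ot" unfolding Ot_def using C0' by (auto intro!: image_eqI[of _ _ 0])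
    obtain Ob where Ob: "open Ob" "g + X t \<in> Ob" "\<forall>y\<in>Ob. \<phi> y \<in> Ot"
      using LUC_cont[OF tg lc \<phi>luc oOt pOt] by blast
    define U2 where "U2 = {u. X t + u \<in> {w. g + w \<in> Ob}}"
    have oU2: "open U2" unfolding U2_def by (intro tg_ltrans_open[OF tg] Ob(1))
    have zU2: "0 \<in> U2" unfolding U2_def using Ob(2) by simp
    have ev2: "eventually (\<lambda>n. \<forall>t'\<in>{t}. - X t' + gpow n (X1 (t' / real n) + X2 (t' / real n)) \<in> U2) sequentially"
      using lim[OF compact_sing oU2 zU2] .
    have ev3: "eventually (\<lambda>n. \<forall>k\<in>{..<N1}. gpow k (X1 (t / real n) + X2 (t / real n)) \<in> V0) sequentially"
    proof (rule eventually_ball_finite[OF finite_lessThan], intro ballI)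
      fix k assume "k \<in> {..<N1}"
      define F where "F r = gpow k (X1 r + X2 r)" for r
      have c1: "continuous_on UNIV X1" "continuous_on UNIV X2"
        using H1 H2 unfolding one_param_subgroups_def by auto
      have "continuous_on UNIV (\<lambda>r. X1 r + X2 r)" by (rule tg_cont_add[OF tg c1])
      from continuous_on_compose2[OF gpow_cont[OF tg, of k] this]
      have "continuous_on UNIV F" unfolding F_def by simp
      then have "isCont F 0" by (simp add: continuous_on_eq_continuous_at)
      moreover have "F 0 = 0" unfolding F_def using ops_zero[OF H1] ops_zero[OF H2] gpow_zero by simp
      moreover have "(\<lambda>n. t / real n) \<longlonglongrightarrow> 0" by (rule lim_const_over_n)
      ultimately have "(\<lambda>n. F (t / real n)) \<longlonglongrightarrow> 0"
        using isCont_tendsto_compose[of 0 F] by metis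
      then show "eventually (\<lambda>n. gpow k (X1 (t / real n) + X2 (t / real n)) \<in> V0) sequentially"
        using oV0 zV0 unfolding F_def by (intro topological_tendstoD) auto
    qed
    have "eventually (\<lambda>n. (\<forall>t'\<in>{t}. - X t' + gpow n (X1 (t' / real n) + X2 (t' / real n)) \<in> U2)
        \<and> (\<forall>k\<in>{..<N1}. gpow k (X1 (t / real n) + X2 (t / real n)) \<in> V0)) sequentially"
      using ev2 ev3 by (rule eventually_conj)
    then obtain N where N: "\<And>n. n \<ge> N \<Longrightarrow> (\<forall>t'\<in>{t}. - X t' + gpow n (X1 (t' / real n) + X2 (t' / real n)) \<in> U2)
        \<and> (\<forall>k\<in>{..<N1}. gpow k (X1 (t / real n) + X2 (t / real n)) \<in> V0)"
      unfolding eventually_sequentially by blast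
    define n where "n = max N (Suc 0)"
    have n1: "n \<ge> 1" "n \<ge> N" unfolding n_def by auto
    define s where "s = t / real n"
    define a1 where "a1 = X1 s"
    define a2 where "a2 = X2 s"
    define h where "h = a1 + a2"
    have spos: "s > 0" "s \<le> t" unfolding s_def using tpos n1 by (auto simp: field_simps)
    have Nn: "- X t + gpow n h \<in> U2" "\<forall>k\<in>{..<N1}. gpow k h \<in> V0"
      using N[OF n1(2)] unfolding h_def a1_def a2_def s_def by auto
    (* path stays in V0 *)
    have path: "gpow k h \<in> V0" if k: "k < n" for k
    proof (cases "k < N1")
      case True then show ?thesis using Nn(2) by auto
    next
      case False
      show ?thesis
      proof (cases "k = 0")
        case True then show ?thesis using zV0 by simp
      next
        case knz: False
        define t' where "t' = t * real k / real n"
        have t': "0 \<le> t'" "t' \<le> t" unfolding t'_def using tpos k n1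
          by (auto simp: field_simps)
        have "t' / real k = s" unfolding t'_def s_def using knz by (simp add: field_simps)
        then have "- X t' + gpow k h \<in> W3b"
          using N1[of k] False t' unfolding h_def a1_def a2_def by auto
        moreover have "X t' \<in> W3a" using dl4(2) t' tlt by auto
        ultimately have "X t' + (- X t' + gpow k h) \<in> V0" using W3(5) by blast
        then show ?thesis by (simp add: add.assoc[symmetric])
      qed
    qed
    (* per-term estimate *)
    define trm where "trm k = \<phi> (g + gpow (Suc k) h) - \<phi> (g + gpow k h) - s *\<^sub>R (D1 + D2)" for k
    have termest: "trm k \<in> (\<lambda>v. (4 * s) *\<^sub>R v) ` C" if k: "k < n" for k
    proof -
      define p where "p = g + gpow k h"
      have pV: "p \<in> V1" "p \<in> V2'" using path[OF k] unfolding p_def V0_def Vg_def by auto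
      have e1: "\<phi> (p + a1) - \<phi> p - s *\<^sub>R D1 \<in> (\<lambda>v. (2 * s) *\<^sub>R v) ` C"
        using UE1(4) pV(1) spos tlt unfolding a1_def by auto
      have "a1 \<in> W1" using dl3(2) spos tlt unfolding a1_def by auto
      then have "p + a1 \<in> V2" using VW1(5) pV(2) by blast
      then have e2: "\<phi> (p + a1 + a2) - \<phi> (p + a1) - s *\<^sub>R D2 \<in> (\<lambda>v. (2 * s) *\<^sub>R v) ` C"
        using UE2(4) spos tlt unfolding a2_def by auto
      have "(\<phi> (p + a1 + a2) - \<phi> (p + a1) - s *\<^sub>R D2) + (\<phi> (p + a1) - \<phi> p - s *\<^sub>R D1)
          \<in> (\<lambda>v. (2 * s + 2 * s) *\<^sub>R v) ` C"
        using Cconv C0' spos e1 e2 by (intro conv_add) auto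
      moreover have "g + gpow (Suc k) h = p + a1 + a2"
        unfolding p_def gpow_Suc' h_def by (simp add: add.assoc)
      ultimately show ?thesis unfolding trm_def p_def[symmetric]
        by (simp add: algebra_simps)
    qed
    have "(\<Sum>k<n. trm k) \<in> (\<lambda>v. (real n * (4 * s)) *\<^sub>R v) ` C"
      using Cconv C0' spos termest by (intro conv_sum) auto
    moreover have "real n * (4 * s) = 4 * t" unfolding s_def using n1 by simp
    moreover have "(\<Sum>k<n. trm k) = \<phi> (g + gpow n h) - \<phi> g - t *\<^sub>R (D1 + D2)"
    proof -
      have "(\<Sum>k<n. trm k) = (\<Sum>k<n. \<phi> (g + gpow (Suc k) h) - \<phi> (g + gpow k h)) - (\<Sum>k<n. s *\<^sub>R (D1 + D2))"
        unfolding trm_def by (rule sum_subtractf)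
      also have "(\<Sum>k<n. \<phi> (g + gpow (Suc k) h) - \<phi> (g + gpow k h)) = \<phi> (g + gpow n h) - \<phi> (g + gpow 0 h)"
        by (rule sum_lessThan_telescope)
      also have "(\<Sum>k<n. s *\<^sub>R (D1 + D2)) = (real n * s) *\<^sub>R (D1 + D2)" by (simp add: sum_constant_scaleR)
      also have "real n * s = t" unfolding s_def using n1 by simp
      finally show ?thesis by simp
    qed
    ultimately have Eest: "\<phi> (g + gpow n h) - \<phi> g - t *\<^sub>R (D1 + D2) \<in> (\<lambda>v. (4 * t) *\<^sub>R v) ` C"
      by simp
    (* B *)
    have "g + (X t + (- X t + gpow n h)) \<in> Ob" using Nn(1) unfolding U2_def by simp
    then have "g + gpow n h \<in> Ob" by (simp add: add.assoc[symmetric])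
    then have "\<phi> (g + gpow n h) \<in> Ot" using Ob(3) by blast
    then have Best: "\<phi> (g + gpow n h) - \<phi> (g + X t) \<in> (\<lambda>v. t *\<^sub>R v) ` C"
      unfolding Ot_def by (simp add: algebra_simps)
    have AB: "(- (\<phi> (g + X t) - \<phi> g - t *\<^sub>R d)) + (- (\<phi> (g + gpow n h) - \<phi> (g + X t)))
        \<in> (\<lambda>v. (t + t) *\<^sub>R v) ` C"
      using Cconv C0' tpos Csym[OF Aest] Csym[OF Best] by (intro conv_add) auto
    have "(- (\<phi> (g + X t) - \<phi> g - t *\<^sub>R d)) + (- (\<phi> (g + gpow n h) - \<phi> (g + X t)))
        + (\<phi> (g + gpow n h) - \<phi> g - t *\<^sub>R (D1 + D2)) \<in> (\<lambda>v. ((t + t) + 4 * t) *\<^sub>R v) ` C"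
      by (rule conv_add[OF Cconv C0' _ _ AB Eest]) (use tpos in auto)
    moreover have "(- (\<phi> (g + X t) - \<phi> g - t *\<^sub>R d)) + (- (\<phi> (g + gpow n h) - \<phi> (g + X t)))
        + (\<phi> (g + gpow n h) - \<phi> g - t *\<^sub>R (D1 + D2)) = t *\<^sub>R v"
      unfolding v_def by (simp add: algebra_simps)
    moreover have "(t + t) + 4 * t = 6 * t" by simp
    ultimately have "t *\<^sub>R v \<in> (\<lambda>v. (6 * t) *\<^sub>R v) ` C" by simp
    then obtain c where c: "c \<in> C" "t *\<^sub>R v = (6 * t) *\<^sub>R c" by blast
    then have "t *\<^sub>R v = t *\<^sub>R (6 *\<^sub>R c)" by (simp add: mult.commute)
    then have "v = 6 *\<^sub>R c" using tpos by (simp only: scaleR_cancel_left) simp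
    then show False using vnot c(1) by blast
  qed
qed

end
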